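(* Let $(n_k)_{k\ge0}$ be a strictly increasing sequence of positive integers with $n_0=1$ such that for every $\varepsilon>0$ there exists $\lambda\in\mathbb{T}\setminus\{1\}$ with $\sup_{k\ge0}|\lambda^{n_k}-1|\le\varepsilon$ and $|\lambda^{n_k}-1|\to0$ as $k\to\infty$. Then there exists a perfect compact subset $K$ of $\mathbb{T}$ such that the metric space $(K,d_{(n_k)})$ is separable and $|\lambda^{n_k}-1|\to0$ as $k\to\infty$ for every $\lambda\in K$.
   Context: $\mathbb{T}$ is the unit circle. For $\lambda,\mu\in\mathbb{T}$, $d_{(n_k)}(\lambda,\mu)=\sup_{k\ge0}|\lambda^{n_k}-\mu^{n_k}|$; this is a metric on $\mathbb{T}$ when $n_0=1$. *)

theory Defs
  imports "HOL-Analysis.Analysis"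
begin

definition d_seq :: "(nat \<Rightarrow> nat) \<Rightarrow> complex \<Rightarrow> complex \<Rightarrow> real" where
  "d_seq n l m = (SUP k. cmod (l ^ n k - m ^ n k))"

definition separable_wrt :: "(complex \<Rightarrow> complex \<Rightarrow> real) \<Rightarrow> complex set \<Rightarrow> bool" where
  "separable_wrt d K \<longleftrightarrow>
     (\<exists>D. countable D \<and> D \<subseteq> K \<and> (\<forall>x\<in>K. \<forall>e>0. \<exists>y\<in>D. d x y < e))"

definition perfect_set :: "'a::topological_space set \<Rightarrow> bool" where
  "perfect_set K \<longleftrightarrow> K \<noteq> {} \<and> closed K \<and> (\<forall>x\<in>K. x islimpt K)"

end

theory Submission imports Defs begin

definition gg :: "(nat \<Rightarrow> complex) \<Rightarrow> (nat \<Rightarrow> real) \<Rightarrow> nat \<Rightarrow> complex" where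
  "gg L x j = 1 + of_real (x j) * (L j - 1)"
definition FF :: "(nat \<Rightarrow> complex) \<Rightarrow> nat \<Rightarrow> (nat \<Rightarrow> real) \<Rightarrow> complex" where
  "FF L N x = (\<Prod>j<N. gg L x j)"
definition CC :: "(nat \<Rightarrow> real) set" where
  "CC = {x. \<forall>j. x j \<in> {0,1}}"

lemma unit_prod:
  fixes a :: "nat \<Rightarrow> complex"
  assumes "finite A" "\<forall>j\<in>A. cmod (a j) = 1"
  shows "cmod (prod a A - 1) \<le> (\<Sum>j\<in>A. cmod (a j - 1))"
  using assms
proof (induction A rule: finite_induct)
  case empty then show ?case by simp
next
  case (insert i A)
  have ai: "cmod (a i) = 1" using insert by auto
  have "prod a (insert i A) - 1 = a i * (prod a A - 1) + (a i - 1)"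
    using insert by (simp add: algebra_simps)
  then have "cmod (prod a (insert i A) - 1) \<le> cmod (a i * (prod a A - 1)) + cmod (a i - 1)"
    by (metis norm_triangle_ineq)
  also have "\<dots> = cmod (prod a A - 1) + cmod (a i - 1)" by (simp add: norm_mult ai)
  also have "\<dots> \<le> (\<Sum>j\<in>A. cmod (a j - 1)) + cmod (a i - 1)" using insert by auto
  finally show ?case using insert by simp
qed

lemma compact_CC: "compact CC"
proof -
  have "compactin (product_topology (\<lambda>i. euclideanreal) UNIV) (PiE UNIV (\<lambda>i. {0,1}))"
    by (subst compactin_PiE) auto
  moreover have "PiE UNIV (\<lambda>i. {0::real,1}) = CC"
    by (auto simp: CC_def PiE_UNIV_domain)
  ultimately have "compact (PiE UNIV (\<lambda>i. {0::real,1}))" "PiE UNIV (\<lambda>i. {0::real,1}) = CC" by (simp_all add: euclidean_product_topology)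
  then show ?thesis by metis
qed

lemma gg_CC: "x \<in> CC \<Longrightarrow> gg L x j = (if x j = 1 then L j else 1)"
  by (auto simp: CC_def gg_def)

lemma geom_tail: "N \<le> M \<Longrightarrow> (\<Sum>j\<in>{N..<M}. (1/2::real)^j) = 2*(1/2)^N - 2*(1/2)^M"
proof (induction M rule: dec_induct)
  case base then show ?case by simp
next
  case (step m) then show ?case by (simp add: power_Suc)
qed

lemma cont_FF: "continuous_on UNIV (FF L N)"
  unfolding FF_def gg_def
  by (intro continuous_intros continuous_on_product_then_coordinatewise continuous_on_id)

definition ff :: "(nat \<Rightarrow> complex) \<Rightarrow> (nat \<Rightarrow> real) \<Rightarrow> complex" where
  "ff L x = lim (\<lambda>N. FF L N x)"

context
  fixes L :: "nat \<Rightarrow> complex" and n :: "nat \<Rightarrow> nat"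
  assumes L1: "\<And>j. cmod (L j) = 1" and Lb: "\<And>j k. cmod (L j ^ n k - 1) \<le> (1/2)^j"
    and n0: "n 0 = 1" and Lt: "\<And>j. (\<lambda>k. cmod (L j ^ n k - 1)) \<longlonglongrightarrow> 0"
begin

lemma gg_norm: "x \<in> CC \<Longrightarrow> cmod (gg L x j) = 1"
  by (simp add: gg_CC L1)

lemma gg_pow: "x \<in> CC \<Longrightarrow> cmod (gg L x j ^ n k - 1) \<le> (1/2)^j"
  by (simp add: gg_CC Lb)

lemma FF_norm: "x \<in> CC \<Longrightarrow> cmod (FF L N x) = 1"
  by (simp add: FF_def prod_norm[symmetric] gg_norm)

lemma FF_diff:
  assumes x: "x \<in> CC" and NM: "N \<le> M"
  shows "cmod (FF L M x ^ n k - FF L N x ^ n k) \<le> 2*(1/2)^N"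
proof -
  define m where "m = n k"
  define Q where "Q = (\<Prod>j\<in>{N..<M}. gg L x j ^ m)"
  have "FF L M x ^ m = (\<Prod>j\<in>{0..<M}. gg L x j ^ m)"
    by (simp add: FF_def prod_power_distrib lessThan_atLeast0)
  also have "\<dots> = (\<Prod>j\<in>{0..<N}. gg L x j ^ m) * Q"
    unfolding Q_def using NM by (simp add: prod.atLeastLessThan_concat)
  also have "(\<Prod>j\<in>{0..<N}. gg L x j ^ m) = FF L N x ^ m"
    by (simp add: FF_def prod_power_distrib lessThan_atLeast0)
  finally have eq: "FF L M x ^ m - FF L N x ^ m = FF L N x ^ m * (Q - 1)"
    by (simp add: algebra_simps)
  have "cmod (FF L M x ^ m - FF L N x ^ m) = cmod (Q - 1)"
    unfolding eq by (simp add: norm_mult norm_power FF_norm x)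
  also have "\<dots> \<le> (\<Sum>j\<in>{N..<M}. cmod (gg L x j ^ m - 1))"
    unfolding Q_def by (rule unit_prod) (auto simp: norm_power gg_norm x)
  also have "\<dots> \<le> (\<Sum>j\<in>{N..<M}. (1/2::real)^j)"
    unfolding m_def by (rule sum_mono) (rule gg_pow[OF x])
  also have "\<dots> \<le> 2*(1/2)^N" using geom_tail[OF NM] by simp
  finally show ?thesis by (simp add: m_def)
qed

lemma FF_diff1:
  assumes x: "x \<in> CC" and NM: "N \<le> M"
  shows "cmod (FF L M x - FF L N x) \<le> 2*(1/2)^N"
  using FF_diff[OF assms, of 0] by (simp add: n0)

lemma unif: "uniform_limit CC (\<lambda>N. FF L N) (ff L) sequentially"
proof -
  have "uniformly_Cauchy_on CC (\<lambda>N. FF L N)"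
  proof (rule uniformly_Cauchy_onI')
    fix e :: real assume e: "e > 0"
    obtain M where M: "(1/2::real)^M < e/2" using real_arch_pow_inv[of "e/2" "1/2"] e by auto
    show "\<exists>M. \<forall>x\<in>CC. \<forall>m\<ge>M. \<forall>p>m. dist (FF L m x) (FF L p x) < e"
    proof (intro exI ballI allI impI)
      fix x m p assume x: "x \<in> CC" and m: "M \<le> m" and p: "m < p"
      have "dist (FF L m x) (FF L p x) = cmod (FF L p x - FF L m x)"
        by (simp add: dist_norm norm_minus_commute)
      also have "\<dots> \<le> 2*(1/2)^m" using FF_diff1[OF x, of m p] p by simp
      also have "\<dots> \<le> 2*(1/2)^M" using m by (simp add: power_decreasing)
      finally show "dist (FF L m x) (FF L p x) < e" using M by simp
    qed
  qed
  then have "uniformly_convergent_on CC (\<lambda>N. FF L N)" by (rule Cauchy_uniformly_convergent)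
  then show ?thesis
    unfolding uniformly_convergent_uniform_limit_iff ff_def by simp
qed

lemma ff_tend: "x \<in> CC \<Longrightarrow> (\<lambda>N. FF L N x) \<longlonglongrightarrow> ff L x"
  by (rule tendsto_uniform_limitI[OF unif])

lemma ff_cont: "continuous_on CC (ff L)"
  by (rule uniform_limit_theorem[OF _ unif])
     (auto intro!: always_eventually continuous_on_subset[OF cont_FF])

lemma ff_norm: "x \<in> CC \<Longrightarrow> cmod (ff L x) = 1"
proof -
  assume x: "x \<in> CC"
  have "(\<lambda>N. cmod (FF L N x)) \<longlonglongrightarrow> cmod (ff L x)" by (intro tendsto_intros ff_tend x)
  moreover have "(\<lambda>N. cmod (FF L N x)) = (\<lambda>N. 1)" using FF_norm[OF x] by simp
  ultimately show ?thesis using LIMSEQ_unique tendsto_const by metis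
qed

lemma ff_diff:
  assumes x: "x \<in> CC"
  shows "cmod (ff L x ^ n k - FF L N x ^ n k) \<le> 2*(1/2)^N"
proof -
  have "(\<lambda>M. cmod (FF L M x ^ n k - FF L N x ^ n k)) \<longlonglongrightarrow> cmod (ff L x ^ n k - FF L N x ^ n k)"
    by (intro tendsto_intros ff_tend x)
  then show ?thesis by (rule Lim_bounded) (use FF_diff[OF x] in auto)
qed

lemma gg_pow_tend: "x \<in> CC \<Longrightarrow> (\<lambda>k. cmod (gg L x j ^ n k - 1)) \<longlonglongrightarrow> 0"
  using Lt[of j] by (simp add: gg_CC)

lemma ff_conv:
  assumes x: "x \<in> CC"
  shows "(\<lambda>k. cmod (ff L x ^ n k - 1)) \<longlonglongrightarrow> 0"
proof (rule LIMSEQ_I)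
  fix r :: real assume r: "r > 0"
  obtain N where N: "(1/2::real)^N < r/4" using real_arch_pow_inv[of "r/4" "1/2"] r by auto
  have "(\<lambda>k. \<Sum>j<N. cmod (gg L x j ^ n k - 1)) \<longlonglongrightarrow> 0"
    by (intro tendsto_null_sum gg_pow_tend x)
  then have "eventually (\<lambda>k. (\<Sum>j<N. cmod (gg L x j ^ n k - 1)) < r/2) sequentially"
    using r by (intro order_tendstoD(2)) auto
  then obtain k0 where k0: "\<And>k. k \<ge> k0 \<Longrightarrow> (\<Sum>j<N. cmod (gg L x j ^ n k - 1)) < r/2"
    by (auto simp: eventually_sequentially)
  show "\<exists>no. \<forall>k\<ge>no. norm (cmod (ff L x ^ n k - 1) - 0) < r"
  proof (intro exI allI impI)
    fix k assume k: "k \<ge> k0"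
    have "cmod (ff L x ^ n k - 1) \<le> cmod (ff L x ^ n k - FF L N x ^ n k) + cmod (FF L N x ^ n k - 1)"
      by (metis diff_add_cancel norm_triangle_ineq add_diff_eq)
    also have "cmod (FF L N x ^ n k - 1) \<le> (\<Sum>j<N. cmod (gg L x j ^ n k - 1))"
      unfolding FF_def prod_power_distrib by (rule unit_prod) (auto simp: norm_power gg_norm x)
    finally have "cmod (ff L x ^ n k - 1) \<le> 2*(1/2)^N + (\<Sum>j<N. cmod (gg L x j ^ n k - 1))"
      using ff_diff[OF x, of k N] by linarith
    then show "norm (cmod (ff L x ^ n k - 1) - 0) < r" using k0[OF k] N by simp
  qed
qed

lemma ff_flip:
  assumes x: "x \<in> CC" and xN: "x N = 0"
  shows "ff L (x(N:=1)) = L N * ff L x"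
proof -
  have x': "x(N:=1) \<in> CC" using x by (auto simp: CC_def)
  have eq: "FF L M (x(N:=1)) = L N * FF L M x" if "M > N" for M
  proof -
    have "FF L M (x(N:=1)) = gg L (x(N:=1)) N * (\<Prod>j\<in>{..<M}-{N}. gg L (x(N:=1)) j)"
      unfolding FF_def using that by (subst prod.remove[of _ N]) auto
    also have "(\<Prod>j\<in>{..<M}-{N}. gg L (x(N:=1)) j) = (\<Prod>j\<in>{..<M}-{N}. gg L x j)"
      by (rule prod.cong) (auto simp: gg_def)
    also have "gg L (x(N:=1)) N = L N" by (simp add: gg_def)
    also have "FF L M x = gg L x N * (\<Prod>j\<in>{..<M}-{N}. gg L x j)"
      unfolding FF_def using that by (subst prod.remove[of _ N]) auto
    moreover have "gg L x N = 1" by (simp add: gg_def xN)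
    ultimately show ?thesis by (metis mult_1)
  qed
  have "(\<lambda>M. FF L M (x(N:=1))) \<longlonglongrightarrow> ff L (x(N:=1))" by (rule ff_tend[OF x'])
  moreover have "(\<lambda>M. FF L M (x(N:=1))) \<longlonglongrightarrow> L N * ff L x"
  proof -
    have "(\<lambda>M. L N * FF L M x) \<longlonglongrightarrow> L N * ff L x" by (intro tendsto_intros ff_tend x)
    moreover have "eventually (\<lambda>M. L N * FF L M x = FF L M (x(N:=1))) sequentially"
      using eventually_gt_at_top[of N] by (rule eventually_mono) (simp add: eq)
    ultimately show ?thesis by (rule Lim_transform_eventually)
  qed
  ultimately show ?thesis by (rule LIMSEQ_unique)
qed

lemma FF_fin: "x \<in> CC \<Longrightarrow> FF L N x = (\<Prod>j\<in>{j\<in>{..<N}. x j = 1}. L j)"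
  unfolding FF_def by (subst prod.inter_filter) (auto simp: gg_CC)

lemma ff_fin:
  assumes S: "S \<subseteq> {..<N}"
  shows "(\<lambda>j. if j \<in> S then 1 else 0) \<in> CC" and "ff L (\<lambda>j. if j \<in> S then 1 else 0) = (\<Prod>j\<in>S. L j)"
proof -
  define x where "x = (\<lambda>j. if j \<in> S then 1 else (0::real))"
  show xC: "(\<lambda>j. if j \<in> S then 1 else 0) \<in> CC" by (auto simp: CC_def)
  have "eventually (\<lambda>M. FF L M x = (\<Prod>j\<in>S. L j)) sequentially"
  proof (rule eventually_mono[OF eventually_ge_at_top[of N]])
    fix M assume M: "N \<le> M"
    have "{j\<in>{..<M}. x j = 1} = S" using S M by (auto simp: x_def)
    then show "FF L M x = (\<Prod>j\<in>S. L j)" using FF_fin[of x M] xC by (simp add: x_def)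
  qed
  then have "(\<lambda>M. FF L M x) \<longlonglongrightarrow> (\<Prod>j\<in>S. L j)"
    by (rule tendsto_eventually)
  then show "ff L (\<lambda>j. if j \<in> S then 1 else 0) = (\<Prod>j\<in>S. L j)"
    using ff_tend[of x] xC LIMSEQ_unique unfolding x_def by blast
qed

end


theorem lemma4p3:
  fixes n :: "nat \<Rightarrow> nat"
  assumes "strict_mono n" and "\<forall>k. n k > 0" and "n 0 = 1"
    and "\<forall>\<epsilon>>0. \<exists>l::complex. cmod l = 1 \<and> l \<noteq> 1 \<and>
            (SUP k. cmod (l ^ n k - 1)) \<le> \<epsilon> \<and>
            ((\<lambda>k. cmod (l ^ n k - 1)) \<longlonglongrightarrow> 0)"
  shows "\<exists>K \<subseteq> sphere (0::complex) 1. perfect_set K \<and> compact K \<and>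
           separable_wrt (d_seq n) K \<and>
           (\<forall>l\<in>K. (\<lambda>k. cmod (l ^ n k - 1)) \<longlonglongrightarrow> 0)"
proof -
  have "\<forall>j. \<exists>l::complex. cmod l = 1 \<and> l \<noteq> 1 \<and>
            (SUP k. cmod (l ^ n k - 1)) \<le> (1/2)^j \<and> ((\<lambda>k. cmod (l ^ n k - 1)) \<longlonglongrightarrow> 0)"
    using assms(4) by simp
  then obtain L where L: "\<And>j. cmod (L j) = 1" "\<And>j. L j \<noteq> 1"
    "\<And>j. (SUP k. cmod (L j ^ n k - 1)) \<le> (1/2)^j" "\<And>j. (\<lambda>k. cmod (L j ^ n k - 1)) \<longlonglongrightarrow> 0"
    by metis
  have Lb: "cmod (L j ^ n k - 1) \<le> (1/2)^j" for j k
  proof -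
    have "bdd_above (range (\<lambda>k. cmod (L j ^ n k - 1)))"
    proof (rule bdd_aboveI2)
      fix k
      have "cmod (L j ^ n k - 1) \<le> cmod (L j ^ n k) + cmod (1::complex)" by (rule norm_triangle_ineq4)
      then show "cmod (L j ^ n k - 1) \<le> 2" by (simp add: norm_power L(1))
    qed
    then have "cmod (L j ^ n k - 1) \<le> (SUP k. cmod (L j ^ n k - 1))" by (rule cSUP_upper[OF UNIV_I])
    then show ?thesis using L(3)[of j] by linarith
  qed
  note F = L(1) Lb assms(3) L(4)
  define K where "K = ff L ` CC"
  have xK: "\<exists>x\<in>CC. y = ff L x" if "y \<in> K" for y using that K_def by auto
  have sub: "K \<subseteq> sphere 0 1" using ff_norm[OF F] by (auto simp: K_def)
  have cK: "compact K" unfolding K_def by (rule compact_continuous_image[OF ff_cont[OF F] compact_CC])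
  have limpt: "y islimpt K" if y: "y \<in> K" for y
  proof (unfold islimpt_approachable, intro allI impI)
    fix e :: real assume e: "e > 0"
    obtain x where x: "x \<in> CC" "y = ff L x" using xK[OF y] by blast
    obtain N where N: "(1/2::real)^N < e" using real_arch_pow_inv[of e "1/2"] e by auto
    have LN: "cmod (L N - 1) < e" using Lb[of N 0] N assms(3) by simp
    have y0: "y \<noteq> 0" using ff_norm[OF F x(1)] x(2) by auto
    have "x N \<in> {0,1}" using x(1) by (auto simp: CC_def)
    then show "\<exists>z\<in>K. z \<noteq> y \<and> dist z y < e"
    proof
      assume x0: "x N = 0"
      have x': "x(N:=1) \<in> CC" using x(1) by (auto simp: CC_def)
      have z: "ff L (x(N:=1)) = L N * y" using ff_flip[OF F x(1) x0] x(2) by simp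
      show ?thesis
      proof (intro bexI conjI)
        show "ff L (x(N:=1)) \<in> K" using x' by (auto simp: K_def)
        show "ff L (x(N:=1)) \<noteq> y" unfolding z using y0 L(2)[of N] by auto
        have "dist (L N * y) y = cmod ((L N - 1) * y)" by (simp add: dist_norm algebra_simps)
        also have "\<dots> = cmod (L N - 1)" using ff_norm[OF F x(1)] x(2) by (simp add: norm_mult)
        finally show "dist (ff L (x(N:=1))) y < e" unfolding z using LN by simp
      qed
    next
      assume "x N \<in> {1}"
      then have x1: "x N = 1" by simp
      define x' where "x' = x(N:=0)"
      have x': "x' \<in> CC" using x(1) by (auto simp: CC_def x'_def)
      have "x'(N:=1) = x" using x1 by (auto simp: x'_def)
      then have z: "y = L N * ff L x'" using ff_flip[OF F x', of N] x(2) by (simp add: x'_def)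
      have fn: "cmod (ff L x') = 1" by (rule ff_norm[OF F x'])
      show ?thesis
      proof (intro bexI conjI)
        show "ff L x' \<in> K" using x' by (auto simp: K_def)
        show "ff L x' \<noteq> y" unfolding z using fn L(2)[of N] by auto
        have "dist (ff L x') (L N * ff L x') = cmod ((L N - 1) * ff L x')"
          by (simp add: dist_norm algebra_simps norm_minus_commute)
        also have "\<dots> = cmod (L N - 1)" using fn by (simp add: norm_mult)
        finally show "dist (ff L x') y < e" unfolding z using LN by simp
      qed
    qed
  qed
  have perf: "perfect_set K"
    unfolding perfect_set_def
  proof (intro conjI ballI limpt)
    have "(\<lambda>_. 0) \<in> CC" by (simp add: CC_def)
    then show "K \<noteq> {}" by (auto simp: K_def)
    show "closed K" using cK by (rule compact_imp_closed)
  qed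
  have sep: "separable_wrt (d_seq n) K"
    unfolding separable_wrt_def
  proof (intro exI conjI ballI allI impI)
    define D where "D = (\<Union>N. (\<lambda>S. \<Prod>j\<in>S. L j) ` Pow {..<N})"
    show "countable D" unfolding D_def
      by (intro countable_UN[OF countableI_type] countable_finite finite_imageI) simp
    show "D \<subseteq> K"
    proof
      fix z assume "z \<in> D"
      then obtain N S where S: "S \<subseteq> {..<N}" "z = (\<Prod>j\<in>S. L j)" by (auto simp: D_def)
      then show "z \<in> K" using ff_fin[OF F S(1)] S(2) unfolding K_def by (metis image_eqI)
    qed
    fix y and e :: real assume y: "y \<in> K" and e: "e > 0"
    obtain x where x: "x \<in> CC" "y = ff L x" using xK[OF y] by blast
    obtain N where N: "(1/2::real)^N < e/4" using real_arch_pow_inv[of "e/4" "1/2"] e by auto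
    have zD: "FF L N x \<in> D" unfolding D_def FF_fin[OF F x(1)] by blast
    have "d_seq n y (FF L N x) \<le> 2*(1/2)^N"
      unfolding d_seq_def x(2) by (rule cSUP_least) (auto intro: ff_diff[OF F x(1)])
    moreover have "(0::real) \<le> (1/2)^N" by simp
    ultimately have "d_seq n y (FF L N x) < e" using N by linarith
    then show "\<exists>z\<in>D. d_seq n y z < e" using zD by blast
  qed
  show ?thesis
  proof (intro exI conjI)
    show "K \<subseteq> sphere 0 1" by (rule sub)
    show "perfect_set K" "compact K" "separable_wrt (d_seq n) K" by fact+
    show "\<forall>l\<in>K. (\<lambda>k. cmod (l ^ n k - 1)) \<longlonglongrightarrow> 0" using ff_conv[OF F] by (auto simp: K_def)
  qed
qed

end
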